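(* Let $n\in\mathbb{N}$, $m\in\{1,\dots,n\}$ and $\alpha\in[0,1]$. In the additive noise ordinal optimisation model (see context), the success probability satisfies $$1-(1-\alpha)^{m}\;\le\; p^{\mathrm{A}}_{\mathrm{success}}(n,m,\alpha)\;\le\; 1-(1-\alpha)^{n}.$$
   Context: Ordinal optimisation model: let $(Z_1,X_1),\dots,(Z_n,X_n)$ be i.i.d. copies of a pair $(Z,X)$ of real random variables. Order the observations $Z_1,\dots,Z_n$ increasingly as $Z_{1:n}\le\dots\le Z_{n:n}$ and, for $i=1,\dots,m$, let $X_{\langle i\rangle}$ denote the $X$-value paired with $Z_{i:n}$ (the concomitant). Let $x^*_\alpha$ be the $\alpha$-quantile of $X$ (so $\Pr(X\le x^*_\alpha)=\alpha$ for continuous $X$). The success probability is $$p_{\mathrm{success}}(n,m,\alpha)=\Pr\Big(\min_{1\le i\le m}X_{\langle i\rangle}\le x^*_\alpha\Big).$$ Additive noise model: $Z_i=X_i+Y_i$ where $X_i$ and $Y_i$ are independent continuous random variables (with $(X_i,Y_i)$ i.i.d. over $i$); the success probability in this model is denoted $p^{\mathrm{A}}_{\mathrm{success}}(n,m,\alpha)$. *)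

theory Defs
  imports "HOL-Probability.Probability"
begin

text \<open>Sample space of the additive noise model with n observations:
  \<omega> i = (X_i, Y_i), i < n, i.i.d. with law \<mu> \<Otimes> \<nu> (X and Y independent).
  Then Z_i = X_i + Y_i.\<close>

definition add_noise_space :: "real measure \<Rightarrow> real measure \<Rightarrow> nat \<Rightarrow> (nat \<Rightarrow> real \<times> real) measure" where
  "add_noise_space \<mu> \<nu> n = PiM {..<n} (\<lambda>_. \<mu> \<Otimes>\<^sub>M \<nu>)"

text \<open>0-based position of index i in the increasing (stable) ordering of z_0,...,z_{n-1};
  Z_i is Z_{(zrank+1):n}. Ties are broken by index (they have probability zero).\<close>

definition zrank :: "nat \<Rightarrow> (nat \<Rightarrow> real) \<Rightarrow> nat \<Rightarrow> nat" where
  "zrank n z i = card {j. j < n \<and> (z j < z i \<or> (z j = z i \<and> j < i))}"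

text \<open>Success event: min of the concomitants X_<1>,...,X_<m> is \<le> x.\<close>

definition success_event_A :: "real measure \<Rightarrow> real measure \<Rightarrow> nat \<Rightarrow> nat \<Rightarrow> ereal \<Rightarrow> (nat \<Rightarrow> real \<times> real) set" where
  "success_event_A \<mu> \<nu> n m x =
     {\<omega> \<in> space (add_noise_space \<mu> \<nu> n).
        \<exists>i<n. zrank n (\<lambda>j. fst (\<omega> j) + snd (\<omega> j)) i < m \<and> ereal (fst (\<omega> i)) \<le> x}"

definition p_success_A :: "real measure \<Rightarrow> real measure \<Rightarrow> nat \<Rightarrow> nat \<Rightarrow> ereal \<Rightarrow> real" where
  "p_success_A \<mu> \<nu> n m x = measure (add_noise_space \<mu> \<nu> n) (success_event_A \<mu> \<nu> n m x)"

end

theory Submission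
  imports Defs
begin

lemma pre_lemma:
  assumes K: "K \<subseteq> {..<n}" and E: "E \<in> {..<n} \<rightarrow> sets \<nu>" and F: "\<And>i. F i \<in> sets \<mu>"
  shows "(\<lambda>\<omega>::nat\<Rightarrow>real\<times>real. \<lambda>i\<in>{..<n}. snd (\<omega> i)) -` Pi\<^sub>E {..<n} E \<inter> {\<omega>. \<forall>k\<in>K. fst (\<omega> k) \<in> F k} \<inter> space (PiM {..<n} (\<lambda>_. \<mu> \<Otimes>\<^sub>M \<nu>))
     = Pi\<^sub>E {..<n} (\<lambda>i. (if i \<in> K then F i else space \<mu>) \<times> E i)" (is "?L = ?R")
proof (intro set_eqI iffI)
  fix \<omega> assume "\<omega> \<in> ?L"
  then show "\<omega> \<in> ?R"
    by (auto simp: space_PiM PiE_iff space_pair_measure mem_Times_iff)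
next
  fix \<omega> assume w: "\<omega> \<in> ?R"
  have Es: "E i \<subseteq> space \<nu>" if "i < n" for i using E that sets.sets_into_space by auto
  have Fs: "F i \<subseteq> space \<mu>" for i using F sets.sets_into_space by auto
  have ext: "\<omega> \<in> extensional {..<n}" using w by (simp add: PiE_iff)
  have comp: "fst (\<omega> i) \<in> (if i \<in> K then F i else space \<mu>) \<and> snd (\<omega> i) \<in> E i" if "i < n" for i
    using w that by (simp add: PiE_iff mem_Times_iff)
  have c1: "(\<lambda>i\<in>{..<n}. snd (\<omega> i)) \<in> Pi\<^sub>E {..<n} E" using comp by (simp add: PiE_iff)
  have c2: "\<forall>k\<in>K. fst (\<omega> k) \<in> F k"
  proof
    fix k assume "k \<in> K"
    then have "k < n" "k \<in> K" using K by auto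
    then show "fst (\<omega> k) \<in> F k" using comp[of k] by simp
  qed
  have c3: "\<omega> \<in> space (PiM {..<n} (\<lambda>_. \<mu> \<Otimes>\<^sub>M \<nu>))"
    unfolding space_PiM PiE_iff space_pair_measure
  proof (intro conjI ballI ext)
    fix i assume "i \<in> {..<n}"
    then have i: "i < n" by simp
    have "fst (\<omega> i) \<in> space \<mu>"
    proof (cases "i \<in> K")
      case True then show ?thesis using comp[OF i] Fs[of i] by auto
    next
      case False then show ?thesis using comp[OF i] by auto
    qed
    moreover have "snd (\<omega> i) \<in> space \<nu>" using comp[OF i] Es[OF i] by auto
    ultimately show "\<omega> i \<in> space \<mu> \<times> space \<nu>" by (simp add: mem_Times_iff)
  qed
  show "\<omega> \<in> ?L" using c1 c2 c3 by simp
qed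

lemma emeasure_PiE_pairs:
  fixes n :: nat
  assumes pm: "prob_space \<mu>" and pn: "prob_space \<nu>"
    and F: "\<And>i. i < n \<Longrightarrow> F i \<in> sets \<mu>" and E: "\<And>i. i < n \<Longrightarrow> E i \<in> sets \<nu>"
  shows "emeasure (PiM {..<n} (\<lambda>_. \<mu> \<Otimes>\<^sub>M \<nu>)) (Pi\<^sub>E {..<n} (\<lambda>i. F i \<times> E i))
    = (\<Prod>i<n. emeasure (\<mu> \<Otimes>\<^sub>M \<nu>) (F i \<times> E i))"
proof -
  interpret mv: prob_space "\<mu> \<Otimes>\<^sub>M \<nu>" by (intro prob_space_pair pm pn)
  have sub: "F i \<times> E i \<subseteq> space (\<mu> \<Otimes>\<^sub>M \<nu>)" if "i \<in> {..<n}" for i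
    using sets.sets_into_space[OF F[of i]] sets.sets_into_space[OF E[of i]] that by (auto simp: space_pair_measure)
  have "prod_emb {..<n} (\<lambda>_. \<mu> \<Otimes>\<^sub>M \<nu>) {..<n} (Pi\<^sub>E {..<n} (\<lambda>i. F i \<times> E i)) = Pi\<^sub>E {..<n} (\<lambda>i. F i \<times> E i)"
    by (rule prod_emb_PiE_same_index) (use sub in auto)
  moreover have "emeasure (PiM {..<n} (\<lambda>_. \<mu> \<Otimes>\<^sub>M \<nu>)) (prod_emb {..<n} (\<lambda>_. \<mu> \<Otimes>\<^sub>M \<nu>) {..<n} (Pi\<^sub>E {..<n} (\<lambda>i. F i \<times> E i)))
    = (\<Prod>i<n. emeasure (\<mu> \<Otimes>\<^sub>M \<nu>) (F i \<times> E i))"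
    using F E by (intro emeasure_PiM_emb mv.prob_space_axioms) auto
  ultimately show ?thesis by simp
qed

lemma indep_lemma:
  fixes \<mu> \<nu> :: "real measure" and n :: nat
  assumes pm: "prob_space \<mu>" and pn: "prob_space \<nu>"
    and C: "C \<in> sets (PiM {..<n} (\<lambda>_. \<nu>))" and K: "K \<subseteq> {..<n}" and D: "D \<in> sets \<mu>"
  shows "emeasure (PiM {..<n} (\<lambda>_. \<mu> \<Otimes>\<^sub>M \<nu>))
     ({\<omega>\<in>space (PiM {..<n} (\<lambda>_. \<mu> \<Otimes>\<^sub>M \<nu>)). (\<lambda>i\<in>{..<n}. snd (\<omega> i)) \<in> C} \<inter>
      {\<omega>\<in>space (PiM {..<n} (\<lambda>_. \<mu> \<Otimes>\<^sub>M \<nu>)). \<forall>k\<in>K. fst (\<omega> k) \<in> D})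
   = emeasure (PiM {..<n} (\<lambda>_. \<mu> \<Otimes>\<^sub>M \<nu>))
     {\<omega>\<in>space (PiM {..<n} (\<lambda>_. \<mu> \<Otimes>\<^sub>M \<nu>)). (\<lambda>i\<in>{..<n}. snd (\<omega> i)) \<in> C} * emeasure \<mu> D ^ card K"
proof -
  interpret m: prob_space \<mu> by fact
  interpret v: prob_space \<nu> by fact
  interpret mv: prob_space "\<mu> \<Otimes>\<^sub>M \<nu>" by (intro prob_space_pair pm pn)
  define P where "P = PiM {..<n} (\<lambda>_. \<mu> \<Otimes>\<^sub>M \<nu>)"
  define N where "N = PiM {..<n} (\<lambda>_. \<nu>)"
  define Yf where "Yf = (\<lambda>\<omega>::nat \<Rightarrow> real \<times> real. \<lambda>i\<in>{..<n}. snd (\<omega> i))"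
  define B where "B = {\<omega>\<in>space P. \<forall>k\<in>K. fst (\<omega> k) \<in> D}"
  define c where "c = emeasure \<mu> D ^ card K"
  interpret P: prob_space P unfolding P_def by (intro prob_space_PiM mv.prob_space_axioms)
  interpret N: prob_space N unfolding N_def by (intro prob_space_PiM v.prob_space_axioms)
  have Yf_meas: "Yf \<in> measurable P N"
    unfolding Yf_def P_def N_def by measurable
  have B_sets: "B \<in> sets P"
    unfolding B_def P_def using D K by measurable (use K in auto)
  define M1 where "M1 = distr (density P (indicator B)) N Yf"
  define M2 where "M2 = density (distr P N Yf) (\<lambda>_. c)"
  have e1: "emeasure M1 X = emeasure P (B \<inter> (Yf -` X \<inter> space P))" if "X \<in> sets N" for X
    unfolding M1_def using that Yf_meas B_sets
    by (subst emeasure_distr) (auto simp: emeasure_restricted)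
  have e2: "emeasure M2 X = c * emeasure P (Yf -` X \<inter> space P)" if "X \<in> sets N" for X
    unfolding M2_def using that Yf_meas
    by (subst emeasure_density_const) (auto simp: emeasure_distr)
  have "M1 = M2"
  proof (rule measure_eqI_generator_eq[OF Int_stable_prod_algebra prod_algebra_sets_into_space])
    show "sets M1 = sigma_sets (\<Pi>\<^sub>E i\<in>{..<n}. space \<nu>) (prod_algebra {..<n} (\<lambda>_. \<nu>))"
      unfolding M1_def N_def by (simp add: sets_PiM)
    show "sets M2 = sigma_sets (\<Pi>\<^sub>E i\<in>{..<n}. space \<nu>) (prod_algebra {..<n} (\<lambda>_. \<nu>))"
      unfolding M2_def N_def by (simp add: sets_PiM)
    show "range (\<lambda>_. \<Pi>\<^sub>E i\<in>{..<n}. space \<nu>) \<subseteq> prod_algebra {..<n} (\<lambda>_. \<nu>)"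
      using space_in_prod_algebra by auto
    show "(\<Union>i. (\<lambda>_. \<Pi>\<^sub>E i\<in>{..<n}. space \<nu>) i) = (\<Pi>\<^sub>E i\<in>{..<n}. space \<nu>)" by simp
    have "(\<Pi>\<^sub>E i\<in>{..<n}. space \<nu>) \<in> sets N" unfolding N_def
      using sets.top[of "PiM {..<n} (\<lambda>_. \<nu>)"] by (simp only: space_PiM)
    then show "emeasure M1 ((\<lambda>_. \<Pi>\<^sub>E i\<in>{..<n}. space \<nu>) i) \<noteq> \<infinity>" for i
      by (simp add: e1 P.emeasure_eq_measure)
    fix X assume X: "X \<in> prod_algebra {..<n} (\<lambda>_. \<nu>)"
    then obtain E where XE: "X = Pi\<^sub>E {..<n} E" and E: "E \<in> (\<Pi> i\<in>{..<n}. sets \<nu>)"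
      by (rule prod_algebraE_all)
    have Xs: "X \<in> sets N" unfolding N_def XE using E by (auto intro: sets_PiM_I_finite)
    have pre: "Yf -` X \<inter> space P = Pi\<^sub>E {..<n} (\<lambda>i. space \<mu> \<times> E i)"
      using pre_lemma[of "{}" n E \<nu> "\<lambda>_. D" \<mu>] E D unfolding XE Yf_def P_def by simp
    have preB: "B \<inter> (Yf -` X \<inter> space P) = Pi\<^sub>E {..<n} (\<lambda>i. (if i \<in> K then D else space \<mu>) \<times> E i)"
    proof -
      have "B \<inter> (Yf -` X \<inter> space P) = Yf -` X \<inter> {\<omega>. \<forall>k\<in>K. fst (\<omega> k) \<in> D} \<inter> space P"
        unfolding B_def by blast
      then show ?thesis using pre_lemma[of K n E \<nu> "\<lambda>_. D" \<mu>] E D K unfolding XE Yf_def P_def by simp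
    qed
    have "emeasure P (Pi\<^sub>E {..<n} (\<lambda>i. (if i \<in> K then D else space \<mu>) \<times> E i))
       = (\<Prod>i<n. emeasure (\<mu> \<Otimes>\<^sub>M \<nu>) ((if i \<in> K then D else space \<mu>) \<times> E i))"
      unfolding P_def using E D by (intro emeasure_PiE_pairs pm pn) auto
    also have "\<dots> = (\<Prod>i<n. emeasure \<mu> (if i \<in> K then D else space \<mu>) * emeasure \<nu> (E i))"
      using E D by (intro prod.cong refl v.emeasure_pair_measure_Times) auto
    also have "\<dots> = c * (\<Prod>i<n. emeasure \<nu> (E i))"
    proof -
      have "(\<Prod>i<n. emeasure \<mu> (if i \<in> K then D else space \<mu>)) = (\<Prod>i<n. if i \<in> K then emeasure \<mu> D else 1)"
        by (intro prod.cong) (auto simp: m.emeasure_space_1)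
      also have "\<dots> = (\<Prod>i\<in>{..<n} \<inter> K. emeasure \<mu> D)"
        by (rule prod.inter_restrict[symmetric]) simp
      also have "{..<n} \<inter> K = K" using K by auto
      finally have "(\<Prod>i<n. emeasure \<mu> (if i \<in> K then D else space \<mu>)) = (\<Prod>i\<in>K. emeasure \<mu> D)" .
      then show ?thesis unfolding c_def by (simp add: prod.distrib)
    qed
    finally have A1: "emeasure M1 X = c * (\<Prod>i<n. emeasure \<nu> (E i))"
      using e1[OF Xs] preB by simp
    have "emeasure P (Pi\<^sub>E {..<n} (\<lambda>i. space \<mu> \<times> E i))
       = (\<Prod>i<n. emeasure (\<mu> \<Otimes>\<^sub>M \<nu>) (space \<mu> \<times> E i))"
      unfolding P_def using E by (intro emeasure_PiE_pairs pm pn) auto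
    also have "\<dots> = (\<Prod>i<n. emeasure \<nu> (E i))"
    proof (rule prod.cong[OF refl])
      fix i assume "i \<in> {..<n}"
      then have "E i \<in> sets \<nu>" using E by auto
      then show "emeasure (\<mu> \<Otimes>\<^sub>M \<nu>) (space \<mu> \<times> E i) = emeasure \<nu> (E i)"
        using v.emeasure_pair_measure_Times[OF sets.top[of \<mu>]] m.emeasure_space_1 by simp
    qed
    finally show "emeasure M1 X = emeasure M2 X"
      using A1 e2[OF Xs] pre by simp
  qed
  have Cs: "C \<in> sets N" using C N_def by simp
  have "emeasure M1 C = emeasure M2 C" using \<open>M1 = M2\<close> by simp
  then have h1: "emeasure P (B \<inter> (Yf -` C \<inter> space P)) = c * emeasure P (Yf -` C \<inter> space P)"
    using e1[OF Cs] e2[OF Cs] by simp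
  have h2: "Yf -` C \<inter> space P = {\<omega>\<in>space P. Yf \<omega> \<in> C}" by auto
  have "emeasure P ({\<omega>\<in>space P. Yf \<omega> \<in> C} \<inter> B) = emeasure P {\<omega>\<in>space P. Yf \<omega> \<in> C} * c"
  proof -
    have i: "{\<omega>\<in>space P. Yf \<omega> \<in> C} \<inter> B = B \<inter> {\<omega>\<in>space P. Yf \<omega> \<in> C}" by (rule Int_commute)
    show ?thesis using h1 unfolding h2 i by (subst mult.commute) assumption
  qed
  then show ?thesis unfolding P_def c_def B_def Yf_def .
qed

definition prec :: "(nat \<Rightarrow> real) \<Rightarrow> nat \<Rightarrow> nat \<Rightarrow> bool" where
  "prec z j i \<longleftrightarrow> z j < z i \<or> (z j = z i \<and> j < i)"

lemma zrank_prec: "zrank n z i = card {j. j < n \<and> prec z j i}"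
  unfolding zrank_def prec_def by simp

lemma zrank_lt_n: "i < n \<Longrightarrow> zrank n z i < n"
proof -
  assume i: "i < n"
  have "{j. j < n \<and> prec z j i} \<subseteq> {..<n} - {i}" by (auto simp: prec_def)
  then have "card {j. j < n \<and> prec z j i} \<le> card ({..<n} - {i})" by (intro card_mono) auto
  then show ?thesis using i by (simp add: zrank_prec)
qed

lemma zrank_mono: assumes "i < n" "k < n" "prec z i k" shows "zrank n z i < zrank n z k"
proof -
  have "{j. j < n \<and> prec z j i} \<subset> {j. j < n \<and> prec z j k}"
  proof
    show "{j. j < n \<and> prec z j i} \<subseteq> {j. j < n \<and> prec z j k}"
      using assms by (auto simp: prec_def)
    have "i \<in> {j. j < n \<and> prec z j k}" "i \<notin> {j. j < n \<and> prec z j i}"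
      using assms by (auto simp: prec_def)
    then show "{j. j < n \<and> prec z j i} \<noteq> {j. j < n \<and> prec z j k}" by blast
  qed
  then show ?thesis unfolding zrank_prec by (intro psubset_card_mono) auto
qed

lemma prec_total: "i \<noteq> k \<Longrightarrow> prec z i k \<or> prec z k i"
  unfolding prec_def by auto

lemma zrank_inj: "inj_on (zrank n z) {..<n}"
proof (rule inj_onI)
  fix i k assume "i \<in> {..<n}" "k \<in> {..<n}" "zrank n z i = zrank n z k"
  then show "i = k" using zrank_mono[of i n k z] zrank_mono[of k n i z] prec_total[of i k z]
    by fastforce
qed

lemma zrank_image: "zrank n z ` {..<n} = {..<n}"
proof -
  have "zrank n z ` {..<n} \<subseteq> {..<n}" using zrank_lt_n by auto
  moreover have "card (zrank n z ` {..<n}) = card {..<n}"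
    using zrank_inj by (simp add: card_image)
  ultimately show ?thesis by (intro card_subset_eq) auto
qed

lemma card_low: assumes "m \<le> n" shows "card {i. i < n \<and> zrank n z i < m} = m"
proof -
  have "zrank n z ` {i. i < n \<and> zrank n z i < m} = {..<m}"
  proof
    show "zrank n z ` {i. i < n \<and> zrank n z i < m} \<subseteq> {..<m}" by auto
    show "{..<m} \<subseteq> zrank n z ` {i. i < n \<and> zrank n z i < m}"
    proof
      fix r assume "r \<in> {..<m}"
      then have "r \<in> zrank n z ` {..<n}" using assms zrank_image[of n z] by auto
      then obtain i where "i < n" "r = zrank n z i" by auto
      then show "r \<in> zrank n z ` {i. i < n \<and> zrank n z i < m}" using \<open>r \<in> {..<m}\<close> by auto
    qed
  qed
  moreover have "inj_on (zrank n z) {i. i < n \<and> zrank n z i < m}"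
    using zrank_inj by (rule inj_on_subset) auto
  ultimately show ?thesis by (metis card_image card_lessThan)
qed

lemma zrank_cong: "(\<And>j. j < n \<Longrightarrow> z j = z' j) \<Longrightarrow> i < n \<Longrightarrow> zrank n z i = zrank n z' i"
  unfolding zrank_def by (intro arg_cong[where f=card]) auto

lemma key:
  fixes X Y :: "nat \<Rightarrow> real" and x :: ereal
  assumes mn: "m \<le> n" and k: "k < n" "zrank n Y k < m" "ereal (X k) \<le> x"
    and ns: "\<not> (\<exists>i<n. zrank n (\<lambda>j. X j + Y j) i < m \<and> ereal (X i) \<le> x)"
  shows False
proof -
  define Z where "Z = (\<lambda>j. X j + Y j)"
  define S where "S = {i. i < n \<and> zrank n Z i < m}"
  have cS: "card S = m" unfolding S_def by (rule card_low[OF mn])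
  have kS: "zrank n Z k \<ge> m" using ns k unfolding Z_def by (meson not_le)
  have "S \<subseteq> {j. j < n \<and> prec Y j k}"
  proof
    fix j assume j: "j \<in> S"
    then have jn: "j < n" and jr: "zrank n Z j < m" unfolding S_def by auto
    have xj: "x < ereal (X j)" using ns jn jr unfolding Z_def by force
    have "ereal (X k) < ereal (X j)" using k(3) xj by (rule le_less_trans)
    then have Xl: "X k < X j" by simp
    have "\<not> prec Z k j" using zrank_mono[OF k(1) jn, of Z] jr kS by auto
    then have "Z j \<le> Z k" unfolding prec_def by auto
    then have "Y j < Y k" using Xl unfolding Z_def by simp
    then show "j \<in> {j. j < n \<and> prec Y j k}" using jn unfolding prec_def by auto
  qed
  then have "card S \<le> zrank n Y k" unfolding zrank_prec by (intro card_mono) auto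
  then show False using cS k(2) by simp
qed

lemma zrank_meas:
  fixes z :: "'a \<Rightarrow> nat \<Rightarrow> real"
  assumes "\<And>j. j < n \<Longrightarrow> (\<lambda>\<omega>. z \<omega> j) \<in> borel_measurable M" and "i < n"
  shows "{\<omega>\<in>space M. zrank n (z \<omega>) i < m} \<in> sets M"
proof -
  have eq: "real (zrank n (z \<omega>) i) = (\<Sum>j<n. if prec (z \<omega>) j i then 1 else 0)" for \<omega>
    unfolding zrank_prec by (simp add: sum.If_cases Int_def)
  have "(\<lambda>\<omega>. (\<Sum>j<n. if prec (z \<omega>) j i then 1 else 0) :: real) \<in> borel_measurable M"
  proof (intro borel_measurable_sum)
    fix j assume "j \<in> {..<n}"
    then have [measurable]: "(\<lambda>\<omega>. z \<omega> j) \<in> borel_measurable M" "(\<lambda>\<omega>. z \<omega> i) \<in> borel_measurable M"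
      using assms by auto
    show "(\<lambda>\<omega>. if prec (z \<omega>) j i then 1 else 0 :: real) \<in> borel_measurable M"
      unfolding prec_def by measurable
  qed
  then have "(\<lambda>\<omega>. real (zrank n (z \<omega>) i)) \<in> borel_measurable M" unfolding eq .
  then have "{\<omega>\<in>space M. real (zrank n (z \<omega>) i) < real m} \<in> sets M" by measurable
  then show ?thesis by simp
qed

theorem mainTheorem1:
  fixes \<mu> \<nu> :: "real measure" and n m :: nat and x :: ereal and \<alpha> :: real
  assumes "prob_space \<mu>" and "sets \<mu> = sets borel"
    and "prob_space \<nu>" and "sets \<nu> = sets borel"
    and "\<forall>t. measure \<mu> {t} = 0" and "\<forall>t. measure \<nu> {t} = 0"
    and "1 \<le> m" and "m \<le> n"
    and "\<alpha> = measure \<mu> {t. ereal t \<le> x}"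
  shows "1 - (1 - \<alpha>) ^ m \<le> p_success_A \<mu> \<nu> n m x \<and> p_success_A \<mu> \<nu> n m x \<le> 1 - (1 - \<alpha>) ^ n"
proof -
  note pm = assms(1) and pn = assms(3) and mn = assms(8)
  interpret m: prob_space \<mu> by fact
  interpret v: prob_space \<nu> by fact
  interpret mv: prob_space "\<mu> \<Otimes>\<^sub>M \<nu>" by (intro prob_space_pair pm pn)
  define P where "P = add_noise_space \<mu> \<nu> n"
  have P_eq: "P = PiM {..<n} (\<lambda>_. \<mu> \<Otimes>\<^sub>M \<nu>)" unfolding P_def add_noise_space_def ..
  interpret P: prob_space P unfolding P_eq by (intro prob_space_PiM mv.prob_space_axioms)
  define N where "N = PiM {..<n} (\<lambda>_. \<nu>)"
  have spm: "space \<mu> = UNIV" using sets_eq_imp_space_eq[OF assms(2)] by simp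
  define G where "G = {t::real. ereal t \<le> x}"
  define D where "D = {t::real. x < ereal t}"
  have G_sets: "G \<in> sets \<mu>" unfolding G_def assms(2) by measurable
  have DG: "D = space \<mu> - G" unfolding D_def G_def spm by auto
  have D_sets: "D \<in> sets \<mu>" unfolding DG using G_sets by auto
  have al: "\<alpha> = measure \<mu> G" unfolding G_def assms(9) ..
  have a01: "0 \<le> 1 - \<alpha>" using m.prob_le_1 al by simp
  have muD: "measure \<mu> D = 1 - \<alpha>" unfolding DG al using G_sets by (simp add: m.prob_compl)
  have emuD: "emeasure \<mu> D = ennreal (1 - \<alpha>)" using muD m.emeasure_eq_measure by simp
  define Ys where "Ys = (\<lambda>\<omega>::nat \<Rightarrow> real \<times> real. \<lambda>i\<in>{..<n}. snd (\<omega> i))"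
  have Ys_meas: "Ys \<in> measurable P N" unfolding Ys_def P_eq N_def by measurable
  have cf: "(\<lambda>\<omega>. fst (\<omega> j)) \<in> borel_measurable P" if j: "j < n" for j
  proof -
    have c: "(\<lambda>\<omega>. \<omega> j) \<in> measurable P (\<mu> \<Otimes>\<^sub>M \<nu>)" using j unfolding P_eq
      by (intro measurable_component_singleton) auto
    have f: "fst \<in> borel_measurable (\<mu> \<Otimes>\<^sub>M \<nu>)"
      using measurable_fst[of \<mu> \<nu>] unfolding measurable_cong_sets[OF refl assms(2)] .
    show ?thesis using measurable_compose[OF c f] by simp
  qed
  have cs: "(\<lambda>\<omega>. snd (\<omega> j)) \<in> borel_measurable P" if j: "j < n" for j
  proof -
    have c: "(\<lambda>\<omega>. \<omega> j) \<in> measurable P (\<mu> \<Otimes>\<^sub>M \<nu>)" using j unfolding P_eq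
      by (intro measurable_component_singleton) auto
    have f: "snd \<in> borel_measurable (\<mu> \<Otimes>\<^sub>M \<nu>)"
      using measurable_snd[of \<mu> \<nu>] unfolding measurable_cong_sets[OF refl assms(4)] .
    show ?thesis using measurable_compose[OF c f] by simp
  qed
  define S where "S = success_event_A \<mu> \<nu> n m x"
  have S_alt: "S = {\<omega>\<in>space P. \<exists>i<n. zrank n (\<lambda>j. fst (\<omega> j) + snd (\<omega> j)) i < m \<and> ereal (fst (\<omega> i)) \<le> x}"
    unfolding S_def success_event_A_def P_def ..
  have ps: "p_success_A \<mu> \<nu> n m x = measure P S" unfolding p_success_A_def P_def S_def ..
  have S_sets: "S \<in> sets P"
  proof -
    have "S = (\<Union>i\<in>{..<n}. {\<omega>\<in>space P. zrank n (\<lambda>j. fst (\<omega> j) + snd (\<omega> j)) i < m} \<inter> {\<omega>\<in>space P. ereal (fst (\<omega> i)) \<le> x})"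
      unfolding S_alt by auto
    also have "\<dots> \<in> sets P"
    proof (intro sets.finite_UN sets.Int finite_lessThan ballI)
      fix i assume i: "i \<in> {..<n}"
      show "{\<omega>\<in>space P. zrank n (\<lambda>j. fst (\<omega> j) + snd (\<omega> j)) i < m} \<in> sets P"
      proof (rule zrank_meas)
        fix j assume "j < n"
        then show "(\<lambda>\<omega>. fst (\<omega> j) + snd (\<omega> j)) \<in> borel_measurable P"
          using cf cs by (intro borel_measurable_add) auto
      qed (use i in auto)
      have [measurable]: "(\<lambda>\<omega>. fst (\<omega> i)) \<in> borel_measurable P" using cf i by auto
      show "{\<omega>\<in>space P. ereal (fst (\<omega> i)) \<le> x} \<in> sets P" by measurable
    qed
    finally show ?thesis .
  qed
  define B where "B = (\<lambda>K. {\<omega>\<in>space P. \<forall>k\<in>K. fst (\<omega> k) \<in> D})"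
  have B_sets: "B K \<in> sets P" if "K \<subseteq> {..<n}" for K
    unfolding B_def P_eq using D_sets that by measurable (use that in auto)
  have indep: "measure P ({\<omega>\<in>space P. Ys \<omega> \<in> C} \<inter> B K) = measure P {\<omega>\<in>space P. Ys \<omega> \<in> C} * (1 - \<alpha>) ^ card K"
    if C: "C \<in> sets N" and K: "K \<subseteq> {..<n}" for C K
  proof -
    have "emeasure P ({\<omega>\<in>space P. Ys \<omega> \<in> C} \<inter> B K) = emeasure P {\<omega>\<in>space P. Ys \<omega> \<in> C} * emeasure \<mu> D ^ card K"
      unfolding P_eq B_def Ys_def using indep_lemma[OF pm pn C[unfolded N_def] K D_sets] by simp
    then have "ennreal (measure P ({\<omega>\<in>space P. Ys \<omega> \<in> C} \<inter> B K)) = ennreal (measure P {\<omega>\<in>space P. Ys \<omega> \<in> C} * (1 - \<alpha>) ^ card K)"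
      using a01 by (simp add: P.emeasure_eq_measure emuD ennreal_power ennreal_mult)
    then show ?thesis using a01 by (subst (asm) ennreal_inj) auto
  qed
  have upper: "measure P S \<le> 1 - (1 - \<alpha>) ^ n"
  proof -
    have sp: "{\<omega>\<in>space P. Ys \<omega> \<in> space N} = space P" using measurable_space[OF Ys_meas] by auto
    have "measure P (B {..<n}) = (1 - \<alpha>) ^ n"
      using indep[of "space N" "{..<n}"] unfolding sp by (simp add: B_def Int_absorb1 P.prob_space)
    moreover have "S \<subseteq> space P - B {..<n}"
      unfolding S_alt B_def D_def by (auto, metis lessThan_iff not_le)
    then have "measure P S \<le> measure P (space P - B {..<n})"
      using B_sets[of "{..<n}"] by (intro P.finite_measure_mono) auto
    ultimately show ?thesis using B_sets[of "{..<n}"] by (simp add: P.prob_compl)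
  qed
  define Kset where "Kset = (\<lambda>y. {i. i < n \<and> zrank n y i < m})"
  define Ks where "Ks = {K. K \<subseteq> {..<n} \<and> card K = m}"
  have Ks_fin: "finite Ks" unfolding Ks_def by (rule finite_subset[of _ "Pow {..<n}"]) auto
  define A where "A = (\<lambda>K. {\<omega>\<in>space P. Ys \<omega> \<in> {y\<in>space N. Kset y = K}})"
  have CK_sets: "{y\<in>space N. Kset y = K} \<in> sets N" if K: "K \<subseteq> {..<n}" for K
  proof -
    have zr: "{y\<in>space N. zrank n y i < m} \<in> sets N" if "i < n" for i
    proof (rule zrank_meas)
      fix j assume "j < n"
      then have "(\<lambda>y. y j) \<in> measurable N \<nu>" unfolding N_def
        by (intro measurable_component_singleton) auto
      then show "(\<lambda>y. y j) \<in> borel_measurable N" unfolding measurable_cong_sets[OF refl assms(4)] .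
    qed fact
    have "{y\<in>space N. Kset y = K} = space N \<inter> (\<Inter>i\<in>{..<n}. if i \<in> K then {y\<in>space N. zrank n y i < m} else space N - {y\<in>space N. zrank n y i < m})"
      using K unfolding Kset_def by auto
    also have "\<dots> \<in> sets N"
    proof (cases "n = 0")
      case True then show ?thesis by simp
    next
      case False
      then show ?thesis using zr by (intro sets.Int sets.top sets.finite_INT) auto
    qed
    finally show ?thesis .
  qed
  have A_sets: "A K \<in> sets P" if "K \<subseteq> {..<n}" for K
    unfolding A_def using measurable_sets[OF Ys_meas CK_sets[OF that]] by (simp add: vimage_def Int_def conj_commute)
  have cover: "space P - S \<subseteq> (\<Union>K\<in>Ks. A K \<inter> B K)"
  proof
    fix \<omega> assume \<omega>: "\<omega> \<in> space P - S"
    define K where "K = Kset (Ys \<omega>)"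
    have ns: "\<not> (\<exists>i<n. zrank n (\<lambda>j. fst (\<omega> j) + snd (\<omega> j)) i < m \<and> ereal (fst (\<omega> i)) \<le> x)"
      using \<omega> unfolding S_alt by auto
    have K_Ks: "K \<in> Ks" unfolding Ks_def K_def Kset_def using card_low[OF mn] by auto
    have "\<omega> \<in> A K" unfolding A_def K_def using \<omega> measurable_space[OF Ys_meas] by auto
    moreover have "\<omega> \<in> B K"
      unfolding B_def
    proof (intro CollectI conjI ballI)
      show "\<omega> \<in> space P" using \<omega> by auto
      fix k assume "k \<in> K"
      then have k: "k < n" "zrank n (Ys \<omega>) k < m" unfolding K_def Kset_def by auto
      have "zrank n (Ys \<omega>) k = zrank n (\<lambda>j. snd (\<omega> j)) k"
        using k(1) by (intro zrank_cong) (auto simp: Ys_def)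
      with k have k2: "zrank n (\<lambda>j. snd (\<omega> j)) k < m" by simp
      show "fst (\<omega> k) \<in> D"
      proof (rule ccontr)
        assume "fst (\<omega> k) \<notin> D"
        then have "ereal (fst (\<omega> k)) \<le> x" unfolding D_def by auto
        from key[where X="\<lambda>j. fst (\<omega> j)" and Y="\<lambda>j. snd (\<omega> j)", OF mn k(1) k2 this] ns show False by simp
      qed
    qed
    ultimately show "\<omega> \<in> (\<Union>K\<in>Ks. A K \<inter> B K)" using K_Ks by auto
  qed
  have Ks_sub: "K \<subseteq> {..<n}" if "K \<in> Ks" for K using that unfolding Ks_def by auto
  have "measure P (space P - S) \<le> measure P (\<Union>K\<in>Ks. A K \<inter> B K)"
    using cover Ks_fin A_sets B_sets Ks_sub by (intro P.finite_measure_mono) auto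
  also have "\<dots> \<le> (\<Sum>K\<in>Ks. measure P (A K \<inter> B K))"
    using Ks_fin A_sets B_sets Ks_sub by (intro P.finite_measure_subadditive_finite) auto
  also have "\<dots> = (\<Sum>K\<in>Ks. measure P (A K) * (1 - \<alpha>) ^ m)"
  proof (rule sum.cong[OF refl])
    fix K assume K: "K \<in> Ks"
    then have "card K = m" unfolding Ks_def by auto
    then show "measure P (A K \<inter> B K) = measure P (A K) * (1 - \<alpha>) ^ m"
      using indep[OF CK_sets[OF Ks_sub[OF K]] Ks_sub[OF K]] unfolding A_def by simp
  qed
  also have "\<dots> = measure P (\<Union>K\<in>Ks. A K) * (1 - \<alpha>) ^ m"
  proof -
    have "measure P (\<Union>K\<in>Ks. A K) = (\<Sum>K\<in>Ks. measure P (A K))"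
      using Ks_fin A_sets Ks_sub
      by (intro P.finite_measure_finite_Union) (auto simp: disjoint_family_on_def A_def)
    then show ?thesis by (simp add: sum_distrib_right)
  qed
  also have "\<dots> \<le> 1 * (1 - \<alpha>) ^ m"
    using a01 by (intro mult_right_mono P.prob_le_1) auto
  finally have "measure P (space P - S) \<le> (1 - \<alpha>) ^ m" by simp
  then have lower: "1 - (1 - \<alpha>) ^ m \<le> measure P S" using S_sets by (simp add: P.prob_compl)
  show ?thesis using lower upper ps by simp
qed

end
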